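(* Let $k\ge 2$, $q\in\{1,\dots,k-1\}$, $n\ge 3$ and $i\ge 1$ be integers. Consider the cylindrical Lights Out game on a board with $i$ rows and $n$ columns whose lights have $k$ states, with every light initially in state $k-q$. Define the integer sequence $S_0=0$, $S_1=-q$, and $S_j=-q-S_{j-2}-3S_{j-1}$ for $j\ge 2$. Then the game is one-pass solvable if and only if $S_i\equiv 0 \pmod{k}$.
   Context: Cylindrical Lights Out game: a grid of buttons with $i$ rows (numbered $1,\dots,i$ from top to bottom) and $n$ columns, whose left and right sides are identified, so column $1$ and column $n$ are adjacent; rows do not wrap around. Each button has a light whose state is an element of $\mathbb{Z}/k\mathbb{Z}$, state $0$ meaning "off". Pressing a button once adds $1 \pmod k$ to the state of its own light and to the states of the lights orthogonally adjacent to it (above, below, left, right, where they exist, with columns taken cyclically). One-pass chasing: for $r=2,3,\dots,i$ in turn, press each button in row $r$ the number of times in $\{0,\dots,k-1\}$ needed to bring the light directly above it (in row $r-1$) to state $0$. The game is one-pass solvable if after this procedure all lights on the board are in state $0$. *)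

theory Defs
  imports Main
begin

text \<open>Board: rows 1..i, columns 0..n-1 (cyclic). A board state assigns to each
position (row, column) an integer representing an element of Z/kZ (kept in 0..k-1).\<close>

type_synonym board = "nat \<Rightarrow> nat \<Rightarrow> int"

definition on_board :: "nat \<Rightarrow> nat \<Rightarrow> nat \<Rightarrow> nat \<Rightarrow> bool" where
  "on_board i n r c \<longleftrightarrow> 1 \<le> r \<and> r \<le> i \<and> c < n"

definition adjacent :: "nat \<Rightarrow> nat \<Rightarrow> nat \<Rightarrow> nat \<Rightarrow> nat \<Rightarrow> bool" where
  "adjacent n r c r' c' \<longleftrightarrow>
     (c' = c \<and> (r' = r + 1 \<or> r = r' + 1)) \<or>
     (r' = r \<and> (c' = (c + 1) mod n \<or> c = (c' + 1) mod n))"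

definition press :: "nat \<Rightarrow> nat \<Rightarrow> nat \<Rightarrow> nat \<Rightarrow> nat \<Rightarrow> board \<Rightarrow> board" where
  "press k i n r c B = (\<lambda>r' c'.
     if on_board i n r' c' \<and> ((r' = r \<and> c' = c) \<or> adjacent n r c r' c')
     then (B r' c' + 1) mod int k else B r' c')"

definition chase_button :: "nat \<Rightarrow> nat \<Rightarrow> nat \<Rightarrow> nat \<Rightarrow> board \<Rightarrow> nat \<Rightarrow> board" where
  "chase_button k i n r B c = (press k i n r c ^^ nat ((- B (r - 1) c) mod int k)) B"

definition chase_row :: "nat \<Rightarrow> nat \<Rightarrow> nat \<Rightarrow> board \<Rightarrow> nat \<Rightarrow> board" where
  "chase_row k i n B r = foldl (chase_button k i n r) B [0..<n]"

definition one_pass_chase :: "nat \<Rightarrow> nat \<Rightarrow> nat \<Rightarrow> board \<Rightarrow> board" where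
  "one_pass_chase k i n B = foldl (chase_row k i n) B [2..<i+1]"

definition one_pass_solvable :: "nat \<Rightarrow> nat \<Rightarrow> nat \<Rightarrow> board \<Rightarrow> bool" where
  "one_pass_solvable k i n B \<longleftrightarrow>
     (\<forall>r c. on_board i n r c \<longrightarrow> one_pass_chase k i n B r c = 0)"

fun S :: "int \<Rightarrow> nat \<Rightarrow> int" where
  "S q 0 = 0"
| "S q (Suc 0) = - q"
| "S q (Suc (Suc j)) = - q - S q j - 3 * S q (Suc j)"

end

theory Submission
  imports Defs
begin

definition eff :: "nat \<Rightarrow> nat \<Rightarrow> (nat \<Rightarrow> nat \<Rightarrow> int) \<Rightarrow> nat \<Rightarrow> nat \<Rightarrow> int" where
  "eff i n X r' c' = (\<Sum>p \<in> {1..i} \<times> {..<n}.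
     if (r' = fst p \<and> c' = snd p) \<or> adjacent n (fst p) (snd p) r' c' then X (fst p) (snd p) else 0)"

definition nb :: "nat \<Rightarrow> nat \<Rightarrow> nat \<Rightarrow> (nat \<times> nat) set" where
  "nb n r c = {(r,c), (r+1,c), (r-1,c), (r,(c+1) mod n), (r,(c+n-1) mod n)}"

lemma modm1: fixes c n :: nat assumes "c < n" "c \<noteq> 0" shows "(c+n-1) mod n = c - 1"
proof -
  obtain m where m: "c = Suc m" using assms by (cases c) auto
  then have "c + n - 1 = m + n" by simp
  then show ?thesis using m assms by simp
qed

lemma modm0: fixes n :: nat assumes "0 < n" shows "(0+n-1) mod n = n - 1"
  using assms by simp

lemma modp1: fixes d n :: nat assumes "d < n" shows "(d+1) mod n = (if d + 1 = n then 0 else d + 1)"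
  using assms by auto

lemma mod_pred:
  fixes c d n :: nat
  assumes "c < n" "d < n"
  shows "(c = (d+1) mod n) \<longleftrightarrow> (d = (c+n-1) mod n)"
proof (cases "c = 0")
  case True
  then show ?thesis using modm0[of n] modp1[OF assms(2)] assms by auto
next
  case False
  then show ?thesis using modm1[OF assms(1) False] modp1[OF assms(2)] assms by auto
qed

lemma cond_iff:
  assumes "1 \<le> r'" "c' < n" "d < n" "n \<ge> 3"
  shows "((r' = r \<and> c' = d) \<or> adjacent n r d r' c') \<longleftrightarrow> (r,d) \<in> nb n r' c'"
  using mod_pred[of c' n d] mod_pred[of d n c'] assms
  unfolding adjacent_def nb_def by auto

lemma mod_facts:
  fixes c n :: nat
  assumes "c < n" "n \<ge> 3"
  shows "(c+1) mod n \<noteq> c" "(c+n-1) mod n \<noteq> c" "(c+1) mod n \<noteq> (c+n-1) mod n"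
proof -
  have p: "(c+1) mod n = (if c + 1 = n then 0 else c + 1)" using modp1[OF assms(1)] .
  show "(c+1) mod n \<noteq> c" using p assms by auto
  show "(c+n-1) mod n \<noteq> c"
  proof (cases "c = 0")
    case True then show ?thesis using modm0[of n] assms by simp
  next
    case False then show ?thesis using modm1[OF assms(1) False] by simp
  qed
  show "(c+1) mod n \<noteq> (c+n-1) mod n"
  proof (cases "c = 0")
    case True then show ?thesis using modm0[of n] assms p by simp
  next
    case False then show ?thesis using modm1[OF assms(1) False] p assms by auto
  qed
qed

lemma eff_expand:
  assumes "1 \<le> r'" "r' \<le> i" "c' < n" "n \<ge> 3"
  shows "eff i n X r' c' = X r' c' + (if r'+1 \<le> i then X (r'+1) c' else 0)
     + (if 2 \<le> r' then X (r'-1) c' else 0) + X r' ((c'+1) mod n) + X r' ((c'+n-1) mod n)"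
proof -
  let ?A = "{1..i} \<times> {..<n}"
  let ?f = "\<lambda>p. X (fst p) (snd p)"
  have "eff i n X r' c' = (\<Sum>p\<in>?A. if p \<in> nb n r' c' then ?f p else 0)"
    unfolding eff_def
    apply (rule sum.cong, simp)
    using cond_iff[OF assms(1,3) _ assms(4)] by (auto simp: mem_Times_iff)
  also have "\<dots> = sum ?f (?A \<inter> nb n r' c')"
    by (simp add: sum.inter_restrict)
  also have "\<dots> = sum ?f (nb n r' c' \<inter> ?A)"
    by (simp add: Int_commute)
  also have "\<dots> = (\<Sum>p\<in>nb n r' c'. if p \<in> ?A then ?f p else 0)"
    by (rule sum.inter_restrict) (simp add: nb_def)
  also have "\<dots> = ?f (r',c') + (if (r'+1,c') \<in> ?A then ?f (r'+1,c') else 0)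
      + (if (r'-1,c') \<in> ?A then ?f (r'-1,c') else 0)
      + (if (r',(c'+1) mod n) \<in> ?A then ?f (r',(c'+1) mod n) else 0)
      + (if (r',(c'+n-1) mod n) \<in> ?A then ?f (r',(c'+n-1) mod n) else 0)"
  proof -
    note mf = mod_facts[OF assms(3,4)]
    have d1: "(r',(c'+n-1) mod n) \<notin> {}" by simp
    have d2: "(r',(c'+1) mod n) \<notin> {(r',(c'+n-1) mod n)}" using mf by simp
    have d3: "(r'-1,c') \<notin> {(r',(c'+1) mod n), (r',(c'+n-1) mod n)}" using assms by auto
    have d4: "(r'+1,c') \<notin> {(r'-1,c'), (r',(c'+1) mod n), (r',(c'+n-1) mod n)}" using assms by auto
    have d5: "(r',c') \<notin> {(r'+1,c'), (r'-1,c'), (r',(c'+1) mod n), (r',(c'+n-1) mod n)}"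
      using assms mf by auto
    show ?thesis unfolding nb_def
      apply (subst sum.insert[OF _ d5], simp)
      apply (subst sum.insert[OF _ d4], simp)
      apply (subst sum.insert[OF _ d3], simp)
      apply (subst sum.insert[OF _ d2], simp)
      apply (simp only: sum.insert[OF _ d1] finite.emptyI sum.empty)
      using assms by (simp add: algebra_simps)
  qed
  also have "\<dots> = X r' c' + (if r'+1 \<le> i then X (r'+1) c' else 0)
     + (if 2 \<le> r' then X (r'-1) c' else 0) + X r' ((c'+1) mod n) + X r' ((c'+n-1) mod n)"
  proof -
    have a1: "(r',c') \<in> ?A" "(r',(c'+1) mod n) \<in> ?A" "(r',(c'+n-1) mod n) \<in> ?A"
      using assms by auto
    have a2: "((r'+1,c') \<in> ?A) = (r'+1 \<le> i)" using assms by auto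
    have a3: "((r'-1,c') \<in> ?A) = (2 \<le> r')" using assms by auto
    show ?thesis by (simp only: a1 a2 a3 if_True fst_conv snd_conv)
  qed
  finally show ?thesis .
qed


lemma press_pow:
  "((press k i n R c ^^ m) B) r' c' mod int k =
   (B r' c' + (if on_board i n r' c' \<and> ((r' = R \<and> c' = c) \<or> adjacent n R c r' c') then int m else 0)) mod int k"
proof (induction m)
  case 0
  then show ?case by simp
next
  case (Suc m)
  let ?C = "on_board i n r' c' \<and> ((r' = R \<and> c' = c) \<or> adjacent n R c r' c')"
  let ?Y = "(press k i n R c ^^ m) B"
  have e: "(press k i n R c ^^ Suc m) B = press k i n R c ?Y" by simp
  show ?case
  proof (cases ?C)
    case True
    have "(press k i n R c ?Y) r' c' = (?Y r' c' + 1) mod int k"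
      using True unfolding press_def by simp
    then have "(press k i n R c ?Y) r' c' mod int k = (?Y r' c' mod int k + 1) mod int k"
      by (simp add: mod_add_left_eq)
    also have "\<dots> = ((B r' c' + int m) mod int k + 1) mod int k" using Suc True by simp
    also have "\<dots> = (B r' c' + int (Suc m)) mod int k" by (metis mod_add_left_eq add.assoc of_nat_Suc add.commute)
    finally show ?thesis using e True by simp
  next
    case False
    have "(press k i n R c ?Y) r' c' = ?Y r' c'"
      using False unfolding press_def by auto
    then show ?thesis using e Suc.IH by (simp only: if_not_P[OF False] add_0_right)
  qed
qed

definition rng :: "nat \<Rightarrow> nat \<Rightarrow> nat \<Rightarrow> board \<Rightarrow> bool" where
  "rng k i n B \<longleftrightarrow> (\<forall>r c. on_board i n r c \<longrightarrow> 0 \<le> B r c \<and> B r c < int k)"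

lemma rng_pow:
  assumes "rng k i n B" "k > 0"
  shows "rng k i n ((press k i n R c ^^ m) B)"
proof (induction m)
  case 0 then show ?case using assms by simp
next
  case (Suc m)
  then show ?case using assms(2) unfolding rng_def press_def by auto
qed

lemma eff_add:
  assumes "1 \<le> R" "R \<le> i" "c < n"
  shows "eff i n (\<lambda>r d. X r d + (if r = R \<and> d = c then t else 0)) r' c' =
    eff i n X r' c' + (if (r' = R \<and> c' = c) \<or> adjacent n R c r' c' then t else 0)"
proof -
  let ?A = "{1..i} \<times> {..<n}"
  let ?C = "\<lambda>p. (r' = fst p \<and> c' = snd p) \<or> adjacent n (fst p) (snd p) r' c'"
  have "eff i n (\<lambda>r d. X r d + (if r = R \<and> d = c then t else 0)) r' c' =
     (\<Sum>p\<in>?A. (if ?C p then X (fst p) (snd p) else 0) + (if p = (R,c) then (if ?C (R,c) then t else 0) else 0))"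
    unfolding eff_def by (rule sum.cong) auto
  also have "\<dots> = eff i n X r' c' + (\<Sum>p\<in>?A. (if p = (R,c) then (if ?C (R,c) then t else 0) else 0))"
    unfolding eff_def by (simp add: sum.distrib)
  also have "\<dots> = eff i n X r' c' + (if ?C (R,c) then t else 0)"
    using assms by simp
  finally show ?thesis by simp
qed

lemma eff_cong:
  assumes "\<And>r d. 1 \<le> r \<Longrightarrow> r \<le> i \<Longrightarrow> d < n \<Longrightarrow> X r d = Y r d"
  shows "eff i n X r' c' = eff i n Y r' c'"
  unfolding eff_def by (rule sum.cong) (auto simp: assms)

definition invb :: "nat \<Rightarrow> nat \<Rightarrow> nat \<Rightarrow> int \<Rightarrow> board \<Rightarrow> (nat \<Rightarrow> nat \<Rightarrow> int) \<Rightarrow> bool" where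
  "invb k i n q B X \<longleftrightarrow> (\<forall>r' c'. on_board i n r' c' \<longrightarrow> B r' c' mod int k = (- q + eff i n X r' c') mod int k)"

lemma inv_step:
  assumes "invb k i n q B X" "on_board i n R c" "int m mod int k = t mod int k"
  shows "invb k i n q ((press k i n R c ^^ m) B) (\<lambda>r d. X r d + (if r = R \<and> d = c then t else 0))"
  unfolding invb_def
proof (intro allI impI)
  fix r' c' assume ob: "on_board i n r' c'"
  have R: "1 \<le> R" "R \<le> i" "c < n" using assms(2) unfolding on_board_def by auto
  let ?C = "(r' = R \<and> c' = c) \<or> adjacent n R c r' c'"
  have "((press k i n R c ^^ m) B) r' c' mod int k = (B r' c' + (if ?C then int m else 0)) mod int k"
    using ob by (simp add: press_pow)
  also have "\<dots> = ((- q + eff i n X r' c') + (if ?C then t else 0)) mod int k"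
    apply (rule mod_add_cong)
    using assms(1) ob unfolding invb_def apply simp
    using assms(3) by simp
  also have "\<dots> = (- q + eff i n (\<lambda>r d. X r d + (if r = R \<and> d = c then t else 0)) r' c') mod int k"
    using eff_add[OF R] by (simp add: algebra_simps)
  finally show "((press k i n R c ^^ m) B) r' c' mod int k =
      (- q + eff i n (\<lambda>r d. X r d + (if r = R \<and> d = c then t else 0)) r' c') mod int k" .
qed

definition P :: "int \<Rightarrow> nat \<Rightarrow> int" where "P q j = - S q (j - 1)"

lemma P0[simp]: "P q 0 = 0" and P1[simp]: "P q (Suc 0) = 0"
  unfolding P_def by simp_all

lemma P_small: assumes "r < 2" shows "P q r = 0"
proof -
  have "r - 1 = 0" using assms by simp
  then show ?thesis unfolding P_def by simp
qed

lemma P_rec: assumes "j \<ge> 2" shows "P q j = q - 3 * P q (j-1) - P q (j-2)"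
proof -
  obtain m where m: "j = Suc (Suc m)" using assms by (metis add_2_eq_Suc le_Suc_ex)
  show ?thesis
  proof (cases m)
    case 0 then show ?thesis using m unfolding P_def by simp
  next
    case (Suc l) then show ?thesis using m unfolding P_def by simp
  qed
qed

definition Xs :: "int \<Rightarrow> nat \<Rightarrow> nat \<Rightarrow> nat \<Rightarrow> nat \<Rightarrow> int" where
  "Xs q R c = (\<lambda>r d. if 1 \<le> r \<and> r < R then P q r else if r = R \<and> d < c then P q r else 0)"


lemma col_step:
  assumes iv: "invb k i n q B (Xs q R c)" and rg: "rng k i n B"
    and R: "2 \<le> R" "R \<le> i" and c: "c < n" and n: "n \<ge> 3" and k: "k > 0"
  shows "invb k i n q (chase_button k i n R B c) (Xs q R (Suc c)) \<and> rng k i n (chase_button k i n R B c)"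
proof -
  define m where "m = nat ((- B (R-1) c) mod int k)"
  have im: "int m = (- B (R-1) c) mod int k" unfolding m_def using k by simp
  have ob: "on_board i n (R-1) c" using R c unfolding on_board_def by auto
  have obR: "on_board i n R c" using R c unfolding on_board_def by auto
  have bv: "B (R-1) c mod int k = (- q + eff i n (Xs q R c) (R-1) c) mod int k"
    using iv ob unfolding invb_def by blast
  have ev: "eff i n (Xs q R c) (R-1) c = 3 * P q (R-1) + P q (R-2)"
  proof -
    have "eff i n (Xs q R c) (R-1) c = Xs q R c (R-1) c + (if R-1+1 \<le> i then Xs q R c (R-1+1) c else 0)
     + (if 2 \<le> R-1 then Xs q R c (R-1-1) c else 0) + Xs q R c (R-1) ((c+1) mod n) + Xs q R c (R-1) ((c+n-1) mod n)"
      using eff_expand[of "R-1" i c n "Xs q R c"] R c n by simp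
    also have "\<dots> = 3 * P q (R-1) + P q (R-2)"
    proof (cases "R = 2")
      case True then show ?thesis using R unfolding Xs_def by (simp add: numeral_eq_Suc)
    next
      case False then show ?thesis using R unfolding Xs_def by (simp add: numeral_eq_Suc)
    qed
    finally show ?thesis .
  qed
  have "int m mod int k = (- B (R-1) c) mod int k" using im by simp
  also have "\<dots> = (- (B (R-1) c mod int k)) mod int k" by (simp add: mod_minus_eq)
  also have "\<dots> = (- ((- q + eff i n (Xs q R c) (R-1) c) mod int k)) mod int k" using bv by simp
  also have "\<dots> = (q - 3 * P q (R-1) - P q (R-2)) mod int k" using ev by (simp add: mod_minus_eq diff_diff_eq)
  also have "\<dots> = P q R mod int k" using P_rec[OF R(1)] by simp
  finally have mm: "int m mod int k = P q R mod int k" .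
  have X: "(\<lambda>r d. Xs q R c r d + (if r = R \<and> d = c then P q R else 0)) = Xs q R (Suc c)"
    using R unfolding Xs_def by (auto simp: fun_eq_iff)
  have cb: "chase_button k i n R B c = (press k i n R c ^^ m) B"
    unfolding chase_button_def m_def by simp
  show ?thesis using inv_step[OF iv obR mm] rng_pow[OF rg k] unfolding cb X by simp
qed

lemma row_step:
  assumes iv: "invb k i n q B (Xs q R 0)" and rg: "rng k i n B"
    and R: "2 \<le> R" "R \<le> i" and n: "n \<ge> 3" and k: "k > 0"
  shows "invb k i n q (chase_row k i n B R) (Xs q (Suc R) 0) \<and> rng k i n (chase_row k i n B R)"
proof -
  have "c \<le> n \<Longrightarrow> invb k i n q (foldl (chase_button k i n R) B [0..<c]) (Xs q R c)
     \<and> rng k i n (foldl (chase_button k i n R) B [0..<c])" for c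
  proof (induction c)
    case 0 then show ?case using iv rg by simp
  next
    case (Suc c)
    then show ?case using col_step[OF _ _ R _ n k, where B="foldl (chase_button k i n R) B [0..<c]" and c=c and q=q] by auto
  qed
  then have h: "invb k i n q (chase_row k i n B R) (Xs q R n) \<and> rng k i n (chase_row k i n B R)"
    unfolding chase_row_def by simp
  have "eff i n (Xs q R n) r' c' = eff i n (Xs q (Suc R) 0) r' c'" for r' c'
    by (rule eff_cong) (auto simp: Xs_def)
  then show ?thesis using h unfolding invb_def by simp
qed


lemma all_rows:
  fixes k n i qn :: nat
  assumes k: "k > 0" and n: "n \<ge> 3" and q: "qn \<le> k" and q1: "1 \<le> qn"
  shows "1 \<le> R \<Longrightarrow> R \<le> i \<Longrightarrow>
    invb k i n (int qn) (foldl (chase_row k i n) (\<lambda>_ _. int k - int qn) [2..<R+1]) (Xs (int qn) (Suc R) 0)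
    \<and> rng k i n (foldl (chase_row k i n) (\<lambda>_ _. int k - int qn) [2..<R+1])"
proof (induction R)
  case 0 then show ?case by simp
next
  case (Suc R)
  show ?case
  proof (cases "R = 0")
    case True
    have z: "eff i n (Xs (int qn) 2 0) r' c' = 0" for r' c'
    proof -
      have "eff i n (Xs (int qn) 2 0) r' c' = eff i n (\<lambda>_ _. 0) r' c'"
        by (rule eff_cong) (auto simp: Xs_def P_small)
      also have "\<dots> = 0" unfolding eff_def by simp
      finally show ?thesis .
    qed
    have "(int k - int qn) mod int k = (- int qn) mod int k"
      by (metis add.commute diff_conv_add_uminus mod_add_self2)
    then show ?thesis using True z k q q1 unfolding invb_def rng_def by (simp add: numeral_eq_Suc)
  next
    case False
    then have ih: "invb k i n (int qn) (foldl (chase_row k i n) (\<lambda>_ _. int k - int qn) [2..<R+1]) (Xs (int qn) (Suc R) 0)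
      \<and> rng k i n (foldl (chase_row k i n) (\<lambda>_ _. int k - int qn) [2..<R+1])"
      using Suc by simp
    have u: "[2..<R+1+1] = [2..<R+1] @ [R+1]" using False by simp
    have R2: "2 \<le> R + 1" "R + 1 \<le> i" using False Suc.prems by auto
    have "invb k i n (int qn) (chase_row k i n (foldl (chase_row k i n) (\<lambda>_ _. int k - int qn) [2..<R+1]) (R+1)) (Xs (int qn) (Suc (R+1)) 0)
      \<and> rng k i n (chase_row k i n (foldl (chase_row k i n) (\<lambda>_ _. int k - int qn) [2..<R+1]) (R+1))"
      using row_step[OF _ _ R2 n k] ih Suc_eq_plus1 by metis
    then show ?thesis unfolding Suc_eq_plus1 u by (simp only: foldl_append foldl_Cons foldl_Nil)
  qed
qed

lemma final_val:
  fixes k n i qn :: nat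
  assumes k: "k > 0" and n: "n \<ge> 3" and q: "qn \<le> k" and q1: "1 \<le> qn" and i: "1 \<le> i"
    and ob: "on_board i n r' c'"
  shows "one_pass_chase k i n (\<lambda>_ _. int k - int qn) r' c' = (if r' < i then 0 else S (int qn) i mod int k)"
proof -
  let ?B = "one_pass_chase k i n (\<lambda>_ _. int k - int qn)"
  let ?q = "int qn"
  have h: "invb k i n ?q ?B (Xs ?q (Suc i) 0) \<and> rng k i n ?B"
    using all_rows[OF k n q q1 i order.refl] unfolding one_pass_chase_def by simp
  have r: "1 \<le> r'" "r' \<le> i" "c' < n" using ob unfolding on_board_def by auto
  have "?B r' c' = ?B r' c' mod int k" using h ob unfolding rng_def by simp
  also have "\<dots> = (- ?q + eff i n (Xs ?q (Suc i) 0) r' c') mod int k" using h ob unfolding invb_def by simp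
  also have "eff i n (Xs ?q (Suc i) 0) r' c' = 3 * P ?q r' + P ?q (r'-1) + (if r' + 1 \<le> i then P ?q (r'+1) else 0)"
  proof -
    have "eff i n (Xs ?q (Suc i) 0) r' c' = Xs ?q (Suc i) 0 r' c' + (if r'+1 \<le> i then Xs ?q (Suc i) 0 (r'+1) c' else 0)
     + (if 2 \<le> r' then Xs ?q (Suc i) 0 (r'-1) c' else 0) + Xs ?q (Suc i) 0 r' ((c'+1) mod n) + Xs ?q (Suc i) 0 r' ((c'+n-1) mod n)"
      using eff_expand[OF r n] by simp
    also have "\<dots> = 3 * P ?q r' + P ?q (r'-1) + (if r' + 1 \<le> i then P ?q (r'+1) else 0)"
    proof (cases "r' = 1")
      case True then show ?thesis using r unfolding Xs_def by simp
    next
      case False then show ?thesis using r unfolding Xs_def by auto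
    qed
    finally show ?thesis .
  qed
  finally have v: "?B r' c' = (- ?q + (3 * P ?q r' + P ?q (r'-1) + (if r' + 1 \<le> i then P ?q (r'+1) else 0))) mod int k" .
  have pr: "P ?q (r'+1) = ?q - 3 * P ?q r' - P ?q (r'-1)" using P_rec[of "r'+1" ?q] r by simp
  show ?thesis
  proof (cases "r' < i")
    case True then show ?thesis using v pr by simp
  next
    case False
    then have "r' = i" using r by simp
    moreover have "P ?q (i+1) = - S ?q i" unfolding P_def by simp
    ultimately have "- ?q + (3 * P ?q r' + P ?q (r'-1) + (if r' + 1 \<le> i then P ?q (r'+1) else 0)) = S ?q i"
      using pr by simp
    then show ?thesis using v False by simp
  qed
qed

theorem mainTheorem1:
  fixes k q n i :: nat
  assumes "k \<ge> 2" and "1 \<le> q" and "q \<le> k - 1" and "n \<ge> 3" and "i \<ge> 1"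
  shows "one_pass_solvable k i n (\<lambda>_ _. int k - int q) \<longleftrightarrow> S (int q) i mod int k = 0"
proof -
  have k: "k > 0" and qk: "q \<le> k" using assms by auto
  note fv = final_val[OF k assms(4) qk assms(2) assms(5)]
  show ?thesis
  proof
    assume "one_pass_solvable k i n (\<lambda>_ _. int k - int q)"
    moreover have "on_board i n i 0" using assms unfolding on_board_def by auto
    ultimately show "S (int q) i mod int k = 0" unfolding one_pass_solvable_def using fv by fastforce
  next
    assume "S (int q) i mod int k = 0"
    then show "one_pass_solvable k i n (\<lambda>_ _. int k - int q)"
      unfolding one_pass_solvable_def using fv by simp
  qed
qed

end
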